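(* Let $G$ be a connected graph with vertex set $\{u_1,\dots,u_n\}$, $n\ge2$, and let $\mathcal{H}=\{H_1,\dots,H_n\}$ be a family of graphs. Then $\dim_l(G\circ\mathcal{H})=\operatorname{adim}_l(G\circ\mathcal{H})$ if and only if $\varrho(G,\mathcal{H})=\varrho'(G,\mathcal{H})$.
   Context: All graphs are finite and simple with at least one vertex. $d_G$ is shortest-path distance ($+\infty$ between components), $d_{G,2}=\min\{d_G,2\}$; $s$ distinguishes $x,y$ w.r.t. $d$ if $d(s,x)\ne d(s,y)$. $\dim_l(G)$: minimum size of $S\subseteq V(G)$ such that any two adjacent vertices are distinguished w.r.t. $d_G$ by a vertex of $S$. $\operatorname{adim}_l(G)$: same with $d_{G,2}$ in place of $d_G$; minimum such sets are local adjacency bases. $\Phi$: edgeless graphs. $\mathcal{G}$: class of graphs $H$ such that every local adjacency basis $B$ of $H$ satisfies $B\subseteq N_H(v)$ for some $v$. True twins: $N[x]=N[y]$; let $U_1,\dots,U_k$ be the non-singleton true twin classes of $G$ and $T(G)=\bigcup_jU_j$. Lexicographic product $G\circ\mathcal{H}$: vertex set $\bigcup_i\{u_i\}\times V(H_i)$, $(u_i,v)\sim(u_j,w)$ iff $u_iu_j\in E(G)$, or $i=j$ and $vw\in E(H_i)$. $V_E=\{u_i\in V(G)-T(G): H_i\in\Phi\}$; $I=\{u_i: H_i\in\mathcal{G}\}$; for each $j$ with $I\cap U_j\ne\emptyset$ choose one vertex of $I\cap U_j$ and let $I'_j$ be the remaining vertices ($I'_j=\emptyset$ otherwise); $X_E=I-\bigcup_jI'_j$.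 Relation $\mathcal{R}$ (resp. $\mathcal{R}'$) on $X_E$: $u_i\sim u_j$ and $d_G(u,u_i)=d_G(u,u_j)$ (resp. $d_{G,2}(u,u_i)=d_{G,2}(u,u_j)$) for all $u\in V(G)-(V_E\cup\{u_i,u_j\})$. $\varrho(G,\mathcal{H})$ (resp. $\varrho'(G,\mathcal{H})$) is the minimum $|A|$ over $A\subseteq X_E$ such that every pair in $X_E$ satisfying $\mathcal{R}$ (resp. $\mathcal{R}'$) is distinguished by a vertex of $A$ w.r.t. $d_G$ (resp. $d_{G,2}$). *)

theory Defs
  imports Main "HOL-Library.Extended_Nat"
begin

definition graph :: "'a set \<Rightarrow> ('a \<Rightarrow> 'a \<Rightarrow> bool) \<Rightarrow> bool" where
  "graph V E \<longleftrightarrow> finite V \<and> V \<noteq> {} \<and> (\<forall>x y. E x y \<longrightarrow> x \<in> V \<and> y \<in> V)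
     \<and> (\<forall>x y. E x y \<longrightarrow> E y x) \<and> (\<forall>x. \<not> E x x)"

text \<open>Shortest-path distance; infinity between different components.\<close>
definition gdist :: "'a set \<Rightarrow> ('a \<Rightarrow> 'a \<Rightarrow> bool) \<Rightarrow> 'a \<Rightarrow> 'a \<Rightarrow> enat" where
  "gdist V E x y = (INF n \<in> {n. \<exists>p. length p = Suc n \<and> hd p = x \<and> last p = y \<and> set p \<subseteq> V
        \<and> (\<forall>i<n. E (p ! i) (p ! Suc i))}. enat n)"

definition dist2 :: "'a set \<Rightarrow> ('a \<Rightarrow> 'a \<Rightarrow> bool) \<Rightarrow> 'a \<Rightarrow> 'a \<Rightarrow> enat" where
  "dist2 V E x y = min (gdist V E x y) 2"

definition connected_graph :: "'a set \<Rightarrow> ('a \<Rightarrow> 'a \<Rightarrow> bool) \<Rightarrow> bool" where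
  "connected_graph V E \<longleftrightarrow> graph V E \<and> (\<forall>x\<in>V. \<forall>y\<in>V. gdist V E x y \<noteq> \<infinity>)"

definition local_res :: "('a \<Rightarrow> 'a \<Rightarrow> enat) \<Rightarrow> 'a set \<Rightarrow> ('a \<Rightarrow> 'a \<Rightarrow> bool) \<Rightarrow> 'a set \<Rightarrow> bool" where
  "local_res d V E S \<longleftrightarrow> S \<subseteq> V \<and> (\<forall>x y. E x y \<longrightarrow> (\<exists>s\<in>S. d s x \<noteq> d s y))"

definition ldim :: "('a \<Rightarrow> 'a \<Rightarrow> enat) \<Rightarrow> 'a set \<Rightarrow> ('a \<Rightarrow> 'a \<Rightarrow> bool) \<Rightarrow> nat" where
  "ldim d V E = Min (card ` {S. local_res d V E S})"

definition dim_l :: "'a set \<Rightarrow> ('a \<Rightarrow> 'a \<Rightarrow> bool) \<Rightarrow> nat" where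
  "dim_l V E = ldim (gdist V E) V E"

definition adim_l :: "'a set \<Rightarrow> ('a \<Rightarrow> 'a \<Rightarrow> bool) \<Rightarrow> nat" where
  "adim_l V E = ldim (dist2 V E) V E"

definition local_adj_basis :: "'a set \<Rightarrow> ('a \<Rightarrow> 'a \<Rightarrow> bool) \<Rightarrow> 'a set \<Rightarrow> bool" where
  "local_adj_basis V E B \<longleftrightarrow> local_res (dist2 V E) V E B \<and> card B = adim_l V E"

definition nbhd :: "('a \<Rightarrow> 'a \<Rightarrow> bool) \<Rightarrow> 'a \<Rightarrow> 'a set" where
  "nbhd E v = {w. E v w}"

definition cnbhd :: "('a \<Rightarrow> 'a \<Rightarrow> bool) \<Rightarrow> 'a \<Rightarrow> 'a set" where
  "cnbhd E v = insert v (nbhd E v)"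

definition in_class_G :: "'a set \<Rightarrow> ('a \<Rightarrow> 'a \<Rightarrow> bool) \<Rightarrow> bool" where
  "in_class_G V E \<longleftrightarrow> (\<forall>B. local_adj_basis V E B \<longrightarrow> (\<exists>v\<in>V. B \<subseteq> nbhd E v))"

definition edgeless :: "'a set \<Rightarrow> ('a \<Rightarrow> 'a \<Rightarrow> bool) \<Rightarrow> bool" where
  "edgeless V E \<longleftrightarrow> (\<forall>x y. \<not> E x y)"

definition twin_classes :: "'a set \<Rightarrow> ('a \<Rightarrow> 'a \<Rightarrow> bool) \<Rightarrow> 'a set set" where
  "twin_classes V E = {U. \<exists>x\<in>V. U = {y\<in>V. cnbhd E y = cnbhd E x} \<and> 2 \<le> card U}"

definition twin_set :: "'a set \<Rightarrow> ('a \<Rightarrow> 'a \<Rightarrow> bool) \<Rightarrow> 'a set" where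
  "twin_set V E = \<Union> (twin_classes V E)"

text \<open>Lexicographic product G \<circ> \<H>, H_u = (HV u, HE u).\<close>
definition lex_V :: "'a set \<Rightarrow> ('a \<Rightarrow> 'b set) \<Rightarrow> ('a \<times> 'b) set" where
  "lex_V V HV = Sigma V HV"

definition lex_E :: "'a set \<Rightarrow> ('a \<Rightarrow> 'a \<Rightarrow> bool) \<Rightarrow> ('a \<Rightarrow> 'b set) \<Rightarrow> ('a \<Rightarrow> 'b \<Rightarrow> 'b \<Rightarrow> bool)
     \<Rightarrow> ('a \<times> 'b) \<Rightarrow> ('a \<times> 'b) \<Rightarrow> bool" where
  "lex_E V E HV HE p q \<longleftrightarrow> p \<in> Sigma V HV \<and> q \<in> Sigma V HV \<and>
     (E (fst p) (fst q) \<or> (fst p = fst q \<and> HE (fst p) (snd p) (snd q)))"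

definition V_E :: "'a set \<Rightarrow> ('a \<Rightarrow> 'a \<Rightarrow> bool) \<Rightarrow> ('a \<Rightarrow> 'b set) \<Rightarrow> ('a \<Rightarrow> 'b \<Rightarrow> 'b \<Rightarrow> bool) \<Rightarrow> 'a set" where
  "V_E V E HV HE = {u \<in> V - twin_set V E. edgeless (HV u) (HE u)}"

definition I_set :: "'a set \<Rightarrow> ('a \<Rightarrow> 'b set) \<Rightarrow> ('a \<Rightarrow> 'b \<Rightarrow> 'b \<Rightarrow> bool) \<Rightarrow> 'a set" where
  "I_set V HV HE = {u \<in> V. in_class_G (HV u) (HE u)}"

text \<open>X is a possible X_E: X = I minus the union of the I'_j, for some choice of one
representative of each nonempty I \<inter> U_j.\<close>
definition XE_choice :: "'a set \<Rightarrow> ('a \<Rightarrow> 'a \<Rightarrow> bool) \<Rightarrow> ('a \<Rightarrow> 'b set) \<Rightarrow> ('a \<Rightarrow> 'b \<Rightarrow> 'b \<Rightarrow> bool)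
     \<Rightarrow> 'a set \<Rightarrow> bool" where
  "XE_choice V E HV HE X \<longleftrightarrow> X \<subseteq> I_set V HV HE \<and> I_set V HV HE - twin_set V E \<subseteq> X \<and>
     (\<forall>U\<in>twin_classes V E. I_set V HV HE \<inter> U \<noteq> {} \<longrightarrow> card (X \<inter> U) = 1)"

definition relR :: "('a \<Rightarrow> 'a \<Rightarrow> enat) \<Rightarrow> 'a set \<Rightarrow> ('a \<Rightarrow> 'a \<Rightarrow> bool) \<Rightarrow> 'a set \<Rightarrow> 'a set
     \<Rightarrow> 'a \<Rightarrow> 'a \<Rightarrow> bool" where
  "relR d V E VE X ui uj \<longleftrightarrow> ui \<in> X \<and> uj \<in> X \<and> E ui uj \<and>
     (\<forall>u\<in>V - (VE \<union> {ui, uj}). d u ui = d u uj)"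

definition rho_gen :: "('a \<Rightarrow> 'a \<Rightarrow> enat) \<Rightarrow> 'a set \<Rightarrow> ('a \<Rightarrow> 'a \<Rightarrow> bool) \<Rightarrow> 'a set \<Rightarrow> 'a set \<Rightarrow> nat" where
  "rho_gen d V E VE X = Min (card ` {A. A \<subseteq> X \<and>
     (\<forall>ui uj. relR d V E VE X ui uj \<longrightarrow> (\<exists>a\<in>A. d a ui \<noteq> d a uj))})"

definition rho :: "'a set \<Rightarrow> ('a \<Rightarrow> 'a \<Rightarrow> bool) \<Rightarrow> ('a \<Rightarrow> 'b set) \<Rightarrow> ('a \<Rightarrow> 'b \<Rightarrow> 'b \<Rightarrow> bool)
     \<Rightarrow> 'a set \<Rightarrow> nat" where
  "rho V E HV HE X = rho_gen (gdist V E) V E (V_E V E HV HE) X"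

definition rho' :: "'a set \<Rightarrow> ('a \<Rightarrow> 'a \<Rightarrow> bool) \<Rightarrow> ('a \<Rightarrow> 'b set) \<Rightarrow> ('a \<Rightarrow> 'b \<Rightarrow> 'b \<Rightarrow> bool)
     \<Rightarrow> 'a set \<Rightarrow> nat" where
  "rho' V E HV HE X = rho_gen (dist2 V E) V E (V_E V E HV HE) X"

end

theory Submission
  imports Defs
begin



definition wk :: "'a set \<Rightarrow> ('a \<Rightarrow> 'a \<Rightarrow> bool) \<Rightarrow> 'a \<Rightarrow> 'a \<Rightarrow> nat \<Rightarrow> bool" where
  "wk V E x y n \<longleftrightarrow> (\<exists>p. length p = Suc n \<and> hd p = x \<and> last p = y \<and> set p \<subseteq> V
        \<and> (\<forall>i<n. E (p ! i) (p ! Suc i)))"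

lemma gdist_wk: "gdist V E x y = (INF n \<in> {n. wk V E x y n}. enat n)"
  unfolding gdist_def wk_def by simp

lemma wk0: "x \<in> V \<Longrightarrow> wk V E x x 0"
  unfolding wk_def by (rule exI[of _ "[x]"]) auto

lemma wk0_eq: "wk V E x y 0 \<Longrightarrow> x = y"
  unfolding wk_def by (auto simp: length_Suc_conv)

lemma wk_mem: "wk V E x y n \<Longrightarrow> x \<in> V \<and> y \<in> V"
proof -
  assume "wk V E x y n"
  then obtain p where p: "length p = Suc n" "hd p = x" "last p = y" "set p \<subseteq> V"
    unfolding wk_def by blast
  then have "p \<noteq> []" by auto
  then have "hd p \<in> set p" "last p \<in> set p" by auto
  then show ?thesis using p by auto
qed

lemma wk_step: "wk V E x y n \<Longrightarrow> E y z \<Longrightarrow> z \<in> V \<Longrightarrow> wk V E x z (Suc n)"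
proof -
  assume "wk V E x y n" "E y z" "z \<in> V"
  then obtain p where p: "length p = Suc n" "hd p = x" "last p = y" "set p \<subseteq> V"
    "\<forall>i<n. E (p ! i) (p ! Suc i)" unfolding wk_def by blast
  have ne: "p \<noteq> []" using p(1) by auto
  have "length (p @ [z]) = Suc (Suc n)" using p by simp
  moreover have "hd (p @ [z]) = x" using p ne by simp
  moreover have "last (p @ [z]) = z" by simp
  moreover have "set (p @ [z]) \<subseteq> V" using p \<open>z \<in> V\<close> by auto
  moreover have "\<forall>i<Suc n. E ((p @ [z]) ! i) ((p @ [z]) ! Suc i)"
  proof (intro allI impI)
    fix i assume i: "i < Suc n"
    show "E ((p @ [z]) ! i) ((p @ [z]) ! Suc i)"
    proof (cases "i < n")
      case True then show ?thesis using p by (simp add: nth_append)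
    next
      case False
      then have "i = n" using i by simp
      moreover have "p ! n = y" using p ne by (simp add: last_conv_nth)
      ultimately show ?thesis using p \<open>E y z\<close> by (simp add: nth_append)
    qed
  qed
  ultimately show ?thesis unfolding wk_def by blast
qed

lemma wk_split: "wk V E x z (Suc n) \<Longrightarrow> \<exists>y. wk V E x y n \<and> E y z"
proof -
  assume "wk V E x z (Suc n)"
  then obtain p where p: "length p = Suc (Suc n)" "hd p = x" "last p = z" "set p \<subseteq> V"
    "\<forall>i<Suc n. E (p ! i) (p ! Suc i)" unfolding wk_def by blast
  define q where "q = butlast p"
  have lq: "length q = Suc n" using p by (simp add: q_def)
  have qne: "q \<noteq> []" using lq by auto
  have pne: "p \<noteq> []" using p(1) by auto
  have "hd q = x" using p(1,2) qne pne unfolding q_def by (simp add: hd_conv_nth nth_butlast)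
  moreover have "set q \<subseteq> V" using p(4) in_set_butlastD unfolding q_def by fast
  moreover have "\<forall>i<n. E (q ! i) (q ! Suc i)" using p lq unfolding q_def
    by (simp add: nth_butlast)
  moreover have "E (last q) z"
  proof -
    have "last q = p ! n" using lq qne unfolding q_def
      by (simp add: last_conv_nth nth_butlast)
    moreover have "z = p ! Suc n" using p(1,3) pne by (simp add: last_conv_nth)
    ultimately show ?thesis using p(5) by simp
  qed
  ultimately show ?thesis unfolding wk_def using lq by blast
qed

lemma wk_one: "E x y \<Longrightarrow> x \<in> V \<Longrightarrow> y \<in> V \<Longrightarrow> wk V E x y 1"
proof -
  assume "E x y" "x \<in> V" "y \<in> V"
  have "wk V E x y (Suc 0)" by (rule wk_step[OF wk0]) (use \<open>E x y\<close> \<open>x \<in> V\<close> \<open>y \<in> V\<close> in auto)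
  then show ?thesis by simp
qed

lemma wk_one_E: "wk V E x y 1 \<Longrightarrow> E x y"
proof -
  assume "wk V E x y 1"
  then have "wk V E x y (Suc 0)" by simp
  then obtain w where w: "wk V E x w 0" "E w y" using wk_split[of V E x y 0] by auto
  have "x = w" using w(1) by (rule wk0_eq)
  then show ?thesis using w(2) by simp
qed

lemma wk_cons: "wk V E y z n \<Longrightarrow> E x y \<Longrightarrow> x \<in> V \<Longrightarrow> wk V E x z (Suc n)"
proof -
  assume "wk V E y z n" "E x y" "x \<in> V"
  then obtain p where p: "length p = Suc n" "hd p = y" "last p = z" "set p \<subseteq> V"
    "\<forall>i<n. E (p ! i) (p ! Suc i)" unfolding wk_def by blast
  have ne: "p \<noteq> []" using p(1) by auto
  have "\<forall>i<Suc n. E ((x # p) ! i) ((x # p) ! Suc i)"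
  proof (intro allI impI)
    fix i assume i: "i < Suc n"
    show "E ((x # p) ! i) ((x # p) ! Suc i)"
    proof (cases i)
      case 0
      have "p ! 0 = y" using p(2) ne by (simp add: hd_conv_nth)
      then show ?thesis using \<open>E x y\<close> 0 by simp
    next
      case (Suc j)
      then have "j < n" using i by simp
      then have "E (p ! j) (p ! Suc j)" using p(5) by blast
      then show ?thesis using Suc by simp
    qed
  qed
  moreover have "last (x # p) = z" using p ne by simp
  ultimately show ?thesis unfolding wk_def using p \<open>x \<in> V\<close>
    by (intro exI[of _ "x # p"]) auto
qed

lemma wk_rev: assumes "\<forall>a b. E a b \<longrightarrow> E b a" shows "wk V E x y n \<Longrightarrow> wk V E y x n"
proof (induction n arbitrary: y)
  case 0
  then have "x = y" by (rule wk0_eq)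
  moreover have "x \<in> V" using wk_mem[OF 0] by simp
  ultimately show ?case using wk0[of x V E] by simp
next
  case (Suc n)
  obtain w where w: "wk V E x w n" "E w y" using wk_split[OF Suc.prems] by blast
  have 1: "wk V E w x n" using Suc.IH w(1) by simp
  have 2: "E y w" using assms w(2) by simp
  have 3: "y \<in> V" using wk_mem[OF Suc.prems] by simp
  show ?case by (rule wk_cons[OF 1 2 3])
qed

lemma gdist_le: assumes "wk V E x y n" shows "gdist V E x y \<le> enat n"
proof -
  have "n \<in> {n. wk V E x y n}" using assms by simp
  then have "(INF n \<in> {n. wk V E x y n}. enat n) \<le> enat n" by (rule INF_lower)
  then show ?thesis unfolding gdist_wk .
qed

lemma gdist_ge: assumes "\<And>n. wk V E x y n \<Longrightarrow> k \<le> enat n" shows "k \<le> gdist V E x y"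
proof -
  have "k \<le> (INF n \<in> {n. wk V E x y n}. enat n)"
  proof (rule INF_greatest)
    fix n assume "n \<in> {n. wk V E x y n}"
    then have "wk V E x y n" by simp
    then show "k \<le> enat n" by (rule assms)
  qed
  then show ?thesis unfolding gdist_wk .
qed

lemma gdist_fin: "gdist V E x y \<noteq> \<infinity> \<Longrightarrow> \<exists>n. gdist V E x y = enat n \<and> wk V E x y n"
proof -
  assume a: "gdist V E x y \<noteq> \<infinity>"
  have "\<exists>n. wk V E x y n"
  proof (rule ccontr)
    assume "\<not> ?thesis"
    then have e: "{n. wk V E x y n} = {}" by auto
    have "gdist V E x y = (INF n\<in>{}. enat n)" unfolding gdist_wk e ..
    also have "\<dots> = \<infinity>" by (simp add: top_enat_def)
    finally show False using a by simp
  qed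
  then have w: "wk V E x y (LEAST n. wk V E x y n)" by (rule LeastI_ex)
  have "gdist V E x y = enat (LEAST n. wk V E x y n)"
  proof (rule antisym)
    show "gdist V E x y \<le> enat (LEAST n. wk V E x y n)" using gdist_le[OF w] .
    show "enat (LEAST n. wk V E x y n) \<le> gdist V E x y"
      by (rule gdist_ge) (simp add: Least_le)
  qed
  then show ?thesis using w by blast
qed

lemma gdist_sym: "\<forall>a b. E a b \<longrightarrow> E b a \<Longrightarrow> gdist V E x y = gdist V E y x"
proof -
  assume s: "\<forall>a b. E a b \<longrightarrow> E b a"
  have *: "gdist V E a b \<le> gdist V E b a" for a b
    by (rule gdist_ge) (rule gdist_le, rule wk_rev[OF s])
  show ?thesis using *[of x y] *[of y x] by simp
qed

lemma gdist_refl: "x \<in> V \<Longrightarrow> gdist V E x x = 0"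
  using gdist_le[OF wk0[of x V E]] by (simp add: zero_enat_def[symmetric])

lemma gdist_one: "E x y \<Longrightarrow> x \<in> V \<Longrightarrow> y \<in> V \<Longrightarrow> x \<noteq> y \<Longrightarrow> gdist V E x y = 1"
proof (rule antisym)
  assume "E x y" "x \<in> V" "y \<in> V" "x \<noteq> y"
  show "gdist V E x y \<le> 1" using gdist_le[OF wk_one[of E x y V]] \<open>E x y\<close> \<open>x \<in> V\<close> \<open>y \<in> V\<close>
    by (simp add: one_enat_def)
  show "1 \<le> gdist V E x y"
  proof (rule gdist_ge)
    fix n assume "wk V E x y n"
    then have "n \<noteq> 0" using \<open>x \<noteq> y\<close> by (cases n) (auto dest: wk0_eq)
    then show "1 \<le> enat n" by (simp add: one_enat_def)
  qed
qed

lemma gdist_two: assumes "\<not> E x y" "x \<noteq> y" shows "2 \<le> gdist V E x y"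
proof (rule gdist_ge)
  fix n assume w: "wk V E x y n"
  have "n \<noteq> 0"
  proof
    assume "n = 0" then show False using w wk0_eq assms(2) by metis
  qed
  moreover have "n \<noteq> 1"
  proof
    assume "n = 1" then show False using w wk_one_E assms(1) by metis
  qed
  ultimately show "2 \<le> enat n" by (simp add: numeral_eq_enat)
qed

lemma gdist_stepE: "E y z \<Longrightarrow> z \<in> V \<Longrightarrow> gdist V E x z \<le> gdist V E x y + 1"
proof (cases "gdist V E x y = \<infinity>")
  case True then show ?thesis by simp
next
  case False
  assume "E y z" "z \<in> V"
  obtain n where n: "gdist V E x y = enat n" "wk V E x y n" using gdist_fin[OF False] by blast
  have "gdist V E x z \<le> enat (Suc n)" using gdist_le[OF wk_step[OF n(2) \<open>E y z\<close> \<open>z \<in> V\<close>]] .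
  then show ?thesis using n(1) by (simp add: eSuc_enat[symmetric] plus_1_eSuc)
qed

lemma graph_sym: "graph V E \<Longrightarrow> E x y \<Longrightarrow> E y x" unfolding graph_def by blast
lemma graph_irr: "graph V E \<Longrightarrow> \<not> E x x" unfolding graph_def by blast
lemma graph_mem: "graph V E \<Longrightarrow> E x y \<Longrightarrow> x \<in> V \<and> y \<in> V" unfolding graph_def by blast

lemma dist2_graph:
  assumes "graph V E" "x \<in> V" "y \<in> V"
  shows "dist2 V E x y = (if x = y then 0 else if E x y then 1 else 2)"
proof -
  consider "x = y" | "x \<noteq> y" "E x y" | "x \<noteq> y" "\<not> E x y" by blast
  then show ?thesis
  proof cases
    case 1 then show ?thesis using gdist_refl[OF assms(2)] by (simp add: dist2_def)
  next
    case 2 then show ?thesis using gdist_one[of E x y V] assms by (simp add: dist2_def)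
  next
    case 3
    then have "2 \<le> gdist V E x y" using gdist_two[of E x y V] by blast
    then have "min (gdist V E x y) 2 = 2" by (rule min_absorb2)
    then show ?thesis using 3 by (simp add: dist2_def)
  qed
qed




lemma wk_ne0: "wk V E x y n \<Longrightarrow> x \<noteq> y \<Longrightarrow> n \<noteq> 0"
proof
  assume "wk V E x y n" "x \<noteq> y" "n = 0"
  then have "wk V E x y 0" by simp
  then have "x = y" by (rule wk0_eq)
  then show False using \<open>x \<noteq> y\<close> by simp
qed

lemma lexE_iff: "lex_E V E HV HE (u,v) (u',w) \<longleftrightarrow>
   u \<in> V \<and> v \<in> HV u \<and> u' \<in> V \<and> w \<in> HV u' \<and> (E u u' \<or> (u = u' \<and> HE u v w))"
  unfolding lex_E_def by auto

lemma proj: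
  assumes G: "graph V E"
  shows "wk (Sigma V HV) (lex_E V E HV HE) p q n \<Longrightarrow> gdist V E (fst p) (fst q) \<le> enat n"
proof (induction n arbitrary: q)
  case 0
  then have "p = q" by (rule wk0_eq)
  moreover have "p \<in> Sigma V HV" using wk_mem[OF 0] by simp
  ultimately show ?case using gdist_refl[of "fst p" V E] by (auto simp: zero_enat_def)
next
  case (Suc n)
  obtain r where r: "wk (Sigma V HV) (lex_E V E HV HE) p r n" "lex_E V E HV HE r q"
    using wk_split[OF Suc.prems] by blast
  have ih: "gdist V E (fst p) (fst r) \<le> enat n" using Suc.IH[OF r(1)] .
  obtain a b c d where rq: "r = (a,b)" "q = (c,d)" by (cases r, cases q) auto
  have h: "a \<in> V" "c \<in> V" "E a c \<or> a = c" using r(2) unfolding rq lexE_iff by auto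
  show ?case
  proof (cases "a = c")
    case True
    then have "gdist V E (fst p) (fst q) \<le> enat n" using ih rq by simp
    also have "\<dots> \<le> enat (Suc n)" by simp
    finally show ?thesis .
  next
    case False
    then have "E a c" using h by simp
    then have "gdist V E (fst p) c \<le> gdist V E (fst p) a + 1" using gdist_stepE[of E a c V "fst p", OF \<open>E a c\<close> h(2)] by simp
    also have "\<dots> \<le> enat n + 1" using ih rq by (simp add: add_right_mono)
    finally show ?thesis using rq by (simp add: eSuc_enat[symmetric] plus_1_eSuc)
  qed
qed

lemma lift:
  assumes G: "graph V E" and ne: "\<forall>u\<in>V. HV u \<noteq> {}"
  shows "wk V E u y (Suc n) \<Longrightarrow> v \<in> HV u \<Longrightarrow> t \<in> HV y \<Longrightarrow>
    wk (Sigma V HV) (lex_E V E HV HE) (u,v) (y,t) (Suc n)"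
proof (induction n arbitrary: y t)
  case 0
  then have e: "E u y" using wk_one_E[of V E u y] by simp
  then have "u \<in> V" "y \<in> V" using graph_mem[OF G e] by auto
  then have "lex_E V E HV HE (u,v) (y,t)" using e 0 by (simp add: lexE_iff)
  moreover have "(u,v) \<in> Sigma V HV" "(y,t) \<in> Sigma V HV" using 0 \<open>u \<in> V\<close> \<open>y \<in> V\<close> by auto
  ultimately show ?case using wk_one[of "lex_E V E HV HE" "(u,v)" "(y,t)" "Sigma V HV"] by simp
next
  case (Suc n)
  obtain y' where y': "wk V E u y' (Suc n)" "E y' y" using wk_split[OF Suc.prems(1)] by blast
  have "y' \<in> V" "y \<in> V" using graph_mem[OF G y'(2)] by auto
  then obtain t' where t': "t' \<in> HV y'" using ne by blast
  have w: "wk (Sigma V HV) (lex_E V E HV HE) (u,v) (y',t') (Suc n)" using Suc.IH[OF y'(1) Suc.prems(2) t'] .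
  have "lex_E V E HV HE (y',t') (y,t)" using \<open>y' \<in> V\<close> \<open>y \<in> V\<close> t' Suc.prems(3) y'(2) by (simp add: lexE_iff)
  moreover have "(y,t) \<in> Sigma V HV" using \<open>y \<in> V\<close> Suc.prems(3) by auto
  ultimately show ?case using wk_step[OF w] by blast
qed

lemma gdistP_diff:
  assumes G: "graph V E" and ne: "\<forall>u\<in>V. HV u \<noteq> {}"
    and "u \<noteq> u'" "u \<in> V" "v \<in> HV u" "u' \<in> V" "w \<in> HV u'"
  shows "gdist (Sigma V HV) (lex_E V E HV HE) (u,v) (u',w) = gdist V E u u'"
proof (rule antisym)
  show "gdist V E u u' \<le> gdist (Sigma V HV) (lex_E V E HV HE) (u,v) (u',w)"
  proof (rule gdist_ge)
    fix n assume "wk (Sigma V HV) (lex_E V E HV HE) (u, v) (u', w) n"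
    from proj[OF G this] show "gdist V E u u' \<le> enat n" by simp
  qed
  show "gdist (Sigma V HV) (lex_E V E HV HE) (u,v) (u',w) \<le> gdist V E u u'"
  proof (cases "gdist V E u u' = \<infinity>")
    case True then show ?thesis by simp
  next
    case False
    obtain n where n: "gdist V E u u' = enat n" "wk V E u u' n" using gdist_fin[OF False] by blast
    have "n \<noteq> 0" using wk_ne0[OF n(2) assms(3)] .
    then obtain m where m: "n = Suc m" by (cases n) auto
    have ww: "wk (Sigma V HV) (lex_E V E HV HE) (u,v) (u',w) n"
      using lift[OF G ne, of u u' m v w HE] n(2) m assms by simp
    show ?thesis using gdist_le[OF ww] n(1) by simp
  qed
qed

lemma gdistP_same:
  assumes G: "graph V E" and H: "\<forall>u\<in>V. graph (HV u) (HE u)"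
    and "u \<in> V" "v \<in> HV u" "w \<in> HV u" "E u u'"
  shows "gdist (Sigma V HV) (lex_E V E HV HE) (u,v) (u,w) = dist2 (HV u) (HE u) v w"
proof -
  have Hu: "graph (HV u) (HE u)" using H assms by blast
  have u': "u' \<in> V" using graph_mem[OF G assms(6)] by simp
  have ne: "HV u' \<noteq> {}" using H u' unfolding graph_def by blast
  consider "v = w" | "v \<noteq> w" "HE u v w" | "v \<noteq> w" "\<not> HE u v w" by blast
  then show ?thesis
  proof cases
    case 1
    then show ?thesis using gdist_refl[of "(u,v)" "Sigma V HV"] assms dist2_graph[OF Hu] by simp
  next
    case 2
    have "gdist (Sigma V HV) (lex_E V E HV HE) (u,v) (u,w) = 1"
      by (rule gdist_one) (use 2 assms in \<open>auto simp: lexE_iff\<close>)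
    then show ?thesis using 2 dist2_graph[OF Hu] assms by simp
  next
    case 3
    have "\<not> lex_E V E HV HE (u,v) (u,w)" using 3 graph_irr[OF G] by (simp add: lexE_iff)
    then have ge: "2 \<le> gdist (Sigma V HV) (lex_E V E HV HE) (u,v) (u,w)"
      using gdist_two[of "lex_E V E HV HE" "(u,v)" "(u,w)" "Sigma V HV"] 3 by simp
    obtain t where t: "t \<in> HV u'" using ne by blast
    have e2: "E u' u" using graph_sym[OF G assms(6)] .
    have w1: "wk (Sigma V HV) (lex_E V E HV HE) (u,v) (u',t) 1"
      by (rule wk_one) (use assms u' t in \<open>auto simp: lexE_iff\<close>)
    have w2: "wk (Sigma V HV) (lex_E V E HV HE) (u,v) (u,w) (Suc 1)"
      by (rule wk_step[OF w1]) (use assms u' t e2 in \<open>auto simp: lexE_iff\<close>)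
    have "gdist (Sigma V HV) (lex_E V E HV HE) (u,v) (u,w) \<le> 2"
      using gdist_le[OF w2] by (simp add: numeral_eq_enat numeral_2_eq_2)
    then have "gdist (Sigma V HV) (lex_E V E HV HE) (u,v) (u,w) = 2" using ge by simp
    then show ?thesis using 3 dist2_graph[OF Hu] assms by simp
  qed
qed

lemma exists_nbr:
  assumes "connected_graph V E" "card V \<ge> 2" "u \<in> V"
  shows "\<exists>u'. E u u'"
proof -
  have G: "graph V E" using assms(1) unfolding connected_graph_def by simp
  have "\<exists>u'\<in>V. u' \<noteq> u"
  proof (rule ccontr)
    assume "\<not> ?thesis"
    then have "V \<subseteq> {u}" by auto
    then have "card V \<le> 1" using card_mono[of "{u}" V] by simp
    then show False using assms(2) by simp
  qed
  then obtain u' where u': "u' \<in> V" "u' \<noteq> u" by blast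
  have fin: "gdist V E u' u \<noteq> \<infinity>" using assms(1) assms(3) u'(1) unfolding connected_graph_def by blast
  obtain n where n: "wk V E u' u n" using gdist_fin[OF fin] by blast
  have "n \<noteq> 0" using wk_ne0[OF n u'(2)] .
  then obtain m where "n = Suc m" by (cases n) auto
  then obtain y where "E y u" using wk_split[of V E u' u m] n by blast
  then show ?thesis using graph_sym[OF G] by blast
qed

lemma twin_le:
  assumes G: "graph V E" and tw: "cnbhd E u = cnbhd E u'" and "z \<noteq> u" "z \<noteq> u'"
  shows "gdist V E z u \<le> gdist V E z u'"
proof (rule gdist_ge)
  fix n assume w: "wk V E z u' n"
  show "gdist V E z u \<le> enat n"
  proof (cases n)
    case 0 then show ?thesis using wk_ne0[OF w] assms(4) by simp
  next
    case (Suc k)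
    obtain y where y: "wk V E z y k" "E y u'" using wk_split[of V E z u' k] w Suc by blast
    show ?thesis
    proof (cases "y = u")
      case True
      then have "gdist V E z u \<le> enat k" using gdist_le[OF y(1)] by simp
      then show ?thesis using Suc by (simp add: order_trans)
    next
      case False
      have "y \<in> cnbhd E u'" using graph_sym[OF G y(2)] unfolding cnbhd_def nbhd_def by simp
      then have "y \<in> cnbhd E u" using tw by simp
      then have "E u y" using False unfolding cnbhd_def nbhd_def by simp
      then have eyu: "E y u" using graph_sym[OF G] by blast
      have uV: "u \<in> V" using graph_mem[OF G eyu] by simp
      have "wk V E z u (Suc k)" by (rule wk_step[OF y(1) eyu uV])
      then have "gdist V E z u \<le> enat (Suc k)" by (rule gdist_le)
      then show ?thesis using Suc by simp
    qed
  qed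
qed

lemma twin_eq:
  assumes G: "graph V E" and tw: "cnbhd E u = cnbhd E u'" and "z \<noteq> u" "z \<noteq> u'"
  shows "gdist V E z u = gdist V E z u' \<and> gdist V E u z = gdist V E u' z"
proof -
  have 1: "gdist V E z u = gdist V E z u'"
    using twin_le[OF G tw assms(3,4)] twin_le[OF G tw[symmetric] assms(4,3)] by simp
  have s: "\<forall>a b. E a b \<longrightarrow> E b a" using graph_sym[OF G] by blast
  have "gdist V E u z = gdist V E z u" using gdist_sym[OF s] .
  moreover have "gdist V E u' z = gdist V E z u'" using gdist_sym[OF s] .
  ultimately show ?thesis using 1 by simp
qed




lemma ldim_fin: "finite V \<Longrightarrow> finite (card ` {S. local_res d V E S})"
proof -
  assume "finite V"
  have "{S. local_res d V E S} \<subseteq> Pow V" unfolding local_res_def by auto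
  then have "finite {S. local_res d V E S}" using \<open>finite V\<close> finite_subset by blast
  then show ?thesis by simp
qed

lemma ldim_le: assumes "finite V" "local_res d V E S" shows "ldim d V E \<le> card S"
proof -
  have "card S \<in> card ` {S. local_res d V E S}" using assms(2) by simp
  then show ?thesis unfolding ldim_def using Min_le[OF ldim_fin[OF assms(1)]] by blast
qed

lemma ldim_ex: assumes "finite V" "local_res d V E S"
  shows "\<exists>S'. local_res d V E S' \<and> card S' = ldim d V E"
proof -
  have "card ` {S. local_res d V E S} \<noteq> {}" using assms(2) by blast
  then have "ldim d V E \<in> card ` {S. local_res d V E S}"
    unfolding ldim_def using Min_in[OF ldim_fin[OF assms(1)]] by blast
  then show ?thesis by auto
qed

definition rfeas where
  "rfeas d V E VE X A \<longleftrightarrow> A \<subseteq> X \<and> (\<forall>ui uj. relR d V E VE X ui uj \<longrightarrow> (\<exists>a\<in>A. d a ui \<noteq> d a uj))"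

lemma rho_gen_alt: "rho_gen d V E VE X = Min (card ` {A. rfeas d V E VE X A})"
  unfolding rho_gen_def rfeas_def by simp

lemma rho_fin: "finite X \<Longrightarrow> finite (card ` {A. rfeas d V E VE X A})"
proof -
  assume "finite X"
  have "{A. rfeas d V E VE X A} \<subseteq> Pow X" unfolding rfeas_def by auto
  then have "finite {A. rfeas d V E VE X A}" using \<open>finite X\<close> finite_subset by blast
  then show ?thesis by simp
qed

lemma rho_le: assumes "finite X" "rfeas d V E VE X A" shows "rho_gen d V E VE X \<le> card A"
proof -
  have "card A \<in> card ` {A. rfeas d V E VE X A}" using assms(2) by simp
  then show ?thesis unfolding rho_gen_alt using Min_le[OF rho_fin[OF assms(1)]] by blast
qed

lemma rho_ex: assumes "finite X" "rfeas d V E VE X A"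
  shows "\<exists>A'. rfeas d V E VE X A' \<and> card A' = rho_gen d V E VE X"
proof -
  have "card ` {A. rfeas d V E VE X A} \<noteq> {}" using assms(2) by blast
  then have "rho_gen d V E VE X \<in> card ` {A. rfeas d V E VE X A}"
    unfolding rho_gen_alt using Min_in[OF rho_fin[OF assms(1)]] by blast
  then show ?thesis by auto
qed

locale core =
  fixes V :: "'a set" and E :: "'a \<Rightarrow> 'a \<Rightarrow> bool"
    and HV :: "'a \<Rightarrow> 'b set" and HE :: "'a \<Rightarrow> 'b \<Rightarrow> 'b \<Rightarrow> bool"
    and X :: "'a set" and dG :: "'a \<Rightarrow> 'a \<Rightarrow> enat" and dP :: "'a \<times> 'b \<Rightarrow> 'a \<times> 'b \<Rightarrow> enat"
  assumes G: "graph V E" and H: "\<forall>u\<in>V. graph (HV u) (HE u)" and XC: "XE_choice V E HV HE X"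
    and dPf: "\<And>z t u v. z \<in> V \<Longrightarrow> t \<in> HV z \<Longrightarrow> u \<in> V \<Longrightarrow> v \<in> HV u \<Longrightarrow>
       dP (z,t) (u,v) = (if z = u then dist2 (HV u) (HE u) t v else dG z u)"
    and D1: "\<And>x y. E x y \<Longrightarrow> dG x y = 1"
    and D2: "\<And>x. x \<in> V \<Longrightarrow> dG x x = 0"
    and D3: "\<And>u u' z. u \<in> V \<Longrightarrow> u' \<in> V \<Longrightarrow> cnbhd E u = cnbhd E u' \<Longrightarrow> z \<in> V \<Longrightarrow>
       z \<noteq> u \<Longrightarrow> z \<noteq> u' \<Longrightarrow> dG z u = dG z u' \<and> dG u z = dG u' z"
begin

abbreviation "PV \<equiv> lex_V V HV"
abbreviation "PE \<equiv> lex_E V E HV HE"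
abbreviation "II \<equiv> I_set V HV HE"
abbreviation "TT \<equiv> twin_set V E"
abbreviation "VE \<equiv> V_E V E HV HE"
abbreviation "aa u \<equiv> adim_l (HV u) (HE u)"
abbreviation "resH u B \<equiv> local_res (dist2 (HV u) (HE u)) (HV u) (HE u) B"
abbreviation "good u B \<equiv> (\<forall>v\<in>HV u. \<not> B \<subseteq> nbhd (HE u) v)"
definition "tw u u' \<longleftrightarrow> u \<in> V \<and> u' \<in> V \<and> cnbhd E u = cnbhd E u'"

lemma finV: "finite V" using G unfolding graph_def by simp
lemma HVu: "u \<in> V \<Longrightarrow> graph (HV u) (HE u)" using H by blast
lemma finHV: "u \<in> V \<Longrightarrow> finite (HV u)" using HVu unfolding graph_def by blast
lemma neHV: "u \<in> V \<Longrightarrow> HV u \<noteq> {}" using HVu unfolding graph_def by blast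
lemma finPV: "finite PV"
  unfolding lex_V_def using finV finHV by (simp add: finite_SigmaI)

lemma d2H: "u \<in> V \<Longrightarrow> t \<in> HV u \<Longrightarrow> v \<in> HV u \<Longrightarrow>
   dist2 (HV u) (HE u) t v = (if t = v then 0 else if HE u t v then 1 else 2)"
  using dist2_graph[OF HVu] by blast

lemma res_iff: "u \<in> V \<Longrightarrow> resH u B \<longleftrightarrow> B \<subseteq> HV u \<and>
   (\<forall>x y. HE u x y \<longrightarrow> (\<exists>s\<in>B. dist2 (HV u) (HE u) s x \<noteq> dist2 (HV u) (HE u) s y))"
  unfolding local_res_def by simp

lemma resH_full: assumes "u \<in> V" shows "resH u (HV u)"
proof -
  have "\<exists>s\<in>HV u. dist2 (HV u) (HE u) s x \<noteq> dist2 (HV u) (HE u) s y" if "HE u x y" for x y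
  proof -
    have m: "x \<in> HV u" "y \<in> HV u" using graph_mem[OF HVu[OF assms] that] by auto
    have "x \<noteq> y" using graph_irr[OF HVu[OF assms]] that by blast
    then have "dist2 (HV u) (HE u) x x \<noteq> dist2 (HV u) (HE u) x y"
      using d2H[OF assms m(1) m(1)] d2H[OF assms m(1) m(2)] that by simp
    then show ?thesis using m by blast
  qed
  then show ?thesis using assms by (simp add: res_iff)
qed

lemma aa_le: "u \<in> V \<Longrightarrow> resH u B \<Longrightarrow> aa u \<le> card B"
  unfolding adim_l_def using ldim_le finHV by blast

lemma aa_ex: "u \<in> V \<Longrightarrow> \<exists>B. resH u B \<and> card B = aa u"
  unfolding adim_l_def using ldim_ex[OF finHV resH_full] by blast

lemma resH_sub: "u \<in> V \<Longrightarrow> resH u B \<Longrightarrow> B \<subseteq> HV u" unfolding local_res_def by simp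

lemma resH_mono: "u \<in> V \<Longrightarrow> resH u B \<Longrightarrow> B \<subseteq> B' \<Longrightarrow> B' \<subseteq> HV u \<Longrightarrow> resH u B'"
  unfolding local_res_def by blast

lemma nb_one: assumes "u \<in> V" "v \<in> HV u" "t \<in> nbhd (HE u) v"
  shows "dist2 (HV u) (HE u) t v = 1"
proof -
  have e: "HE u v t" using assms(3) unfolding nbhd_def by simp
  have "t \<in> HV u" using graph_mem[OF HVu[OF assms(1)] e] by simp
  moreover have "t \<noteq> v" using e graph_irr[OF HVu[OF assms(1)]] by blast
  moreover have "HE u t v" using graph_sym[OF HVu[OF assms(1)] e] .
  ultimately show ?thesis using d2H[OF assms(1) _ assms(2)] by simp
qed

lemma notnb: assumes "u \<in> V" "v \<in> HV u" "t \<in> HV u" "t \<notin> nbhd (HE u) v"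
  shows "dist2 (HV u) (HE u) t v \<noteq> 1"
proof -
  have "\<not> HE u t v" using assms(4) graph_sym[OF HVu[OF assms(1)]] unfolding nbhd_def by blast
  then show ?thesis using d2H[OF assms(1) assms(3) assms(2)] by simp
qed

lemma glemma: assumes "u \<in> II" shows "\<exists>B. resH u B \<and> card B = aa u + 1 \<and> good u B"
proof -
  have uV: "u \<in> V" using assms unfolding I_set_def by simp
  have inG: "in_class_G (HV u) (HE u)" using assms unfolding I_set_def by simp
  obtain B0 where B0: "resH u B0" "card B0 = aa u" using aa_ex[OF uV] by blast
  have "local_adj_basis (HV u) (HE u) B0" using B0 unfolding local_adj_basis_def by simp
  then obtain v where v: "v \<in> HV u" "B0 \<subseteq> nbhd (HE u) v" using inG unfolding in_class_G_def by blast
  have vB: "v \<notin> B0" using v(2) graph_irr[OF HVu[OF uV]] unfolding nbhd_def by blast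
  have finB: "finite B0" using finite_subset[OF resH_sub[OF uV B0(1)] finHV[OF uV]] .
  define B where "B = insert v B0"
  have "resH u B" using resH_mono[OF uV B0(1)] resH_sub[OF uV B0(1)] v(1) unfolding B_def by blast
  moreover have "card B = aa u + 1" using vB finB B0(2) unfolding B_def by simp
  moreover have "good u B"
  proof (intro ballI notI)
    fix x assume x: "x \<in> HV u" "B \<subseteq> nbhd (HE u) x"
    have vx: "HE u x v" using x(2) unfolding B_def nbhd_def by simp
    then have "HE u v x" using graph_sym[OF HVu[OF uV]] by blast
    have rr: "\<forall>x y. HE u x y \<longrightarrow> (\<exists>s\<in>B0. dist2 (HV u) (HE u) s x \<noteq> dist2 (HV u) (HE u) s y)"
      using B0(1) unfolding local_res_def by simp
    have "\<exists>s\<in>B0. dist2 (HV u) (HE u) s v \<noteq> dist2 (HV u) (HE u) s x"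
      using rr \<open>HE u v x\<close> by simp
    then obtain s where s: "s \<in> B0" "dist2 (HV u) (HE u) s v \<noteq> dist2 (HV u) (HE u) s x" by blast
    have "s \<in> nbhd (HE u) v" "s \<in> nbhd (HE u) x" using s(1) v(2) x(2) unfolding B_def by auto
    then show False using s(2) nb_one[OF uV v(1)] nb_one[OF uV x(1)] by simp
  qed
  ultimately show ?thesis by blast
qed

lemma nonG: assumes "u \<in> V" "u \<notin> II" shows "\<exists>B. resH u B \<and> card B = aa u \<and> good u B"
proof -
  have "\<not> in_class_G (HV u) (HE u)" using assms unfolding I_set_def by simp
  then obtain B where "local_adj_basis (HV u) (HE u) B" "\<not> (\<exists>v\<in>HV u. B \<subseteq> nbhd (HE u) v)"
    unfolding in_class_G_def by blast
  then show ?thesis unfolding local_adj_basis_def by blast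
qed

lemma basis_ng: assumes "u \<in> II" "resH u B" "card B = aa u"
  shows "\<exists>v\<in>HV u. B \<subseteq> nbhd (HE u) v"
  using assms unfolding I_set_def in_class_G_def local_adj_basis_def by blast

lemma edgeless_I: assumes "u \<in> V" "edgeless (HV u) (HE u)" shows "u \<in> II" "aa u = 0"
proof -
  have r: "resH u {}" using assms(2) unfolding local_res_def edgeless_def by simp
  then have a0: "aa u = 0" using aa_le[OF assms(1) r] by simp
  show "aa u = 0" by (rule a0)
  have "in_class_G (HV u) (HE u)"
    unfolding in_class_G_def
  proof (intro allI impI)
    fix B assume "local_adj_basis (HV u) (HE u) B"
    then have "card B = 0" "B \<subseteq> HV u" using a0 unfolding local_adj_basis_def local_res_def by auto
    then have "B = {}" using finHV[OF assms(1)] finite_subset by (metis card_0_eq)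
    then show "\<exists>v\<in>HV u. B \<subseteq> nbhd (HE u) v" using neHV[OF assms(1)] by blast
  qed
  then show "u \<in> II" using assms(1) unfolding I_set_def by simp
qed

lemma resH_empty: "u \<in> V \<Longrightarrow> resH u {} \<Longrightarrow> edgeless (HV u) (HE u)"
  unfolding local_res_def edgeless_def by simp

lemma good_ne: "u \<in> V \<Longrightarrow> good u B \<Longrightarrow> B \<noteq> {}"
  using neHV by blast

lemma tw_sym: "tw u u' \<Longrightarrow> tw u' u" unfolding tw_def by simp
lemma tw_trans: "tw u u' \<Longrightarrow> tw u' u'' \<Longrightarrow> tw u u''" unfolding tw_def by simp
lemma tw_refl: "u \<in> V \<Longrightarrow> tw u u" unfolding tw_def by simp
lemma tw_V: "tw u u' \<Longrightarrow> u \<in> V \<and> u' \<in> V" unfolding tw_def by simp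

lemma tw_adj: assumes "tw x y" "x \<noteq> y" shows "E x y"
proof -
  have "x \<in> cnbhd E y" using assms(1) unfolding tw_def cnbhd_def by auto
  then have "E y x" using assms(2) unfolding cnbhd_def nbhd_def by simp
  then show ?thesis using graph_sym[OF G] by blast
qed

lemma tw_E: assumes "tw a a'" "z \<noteq> a" "z \<noteq> a'" "E a z" shows "E a' z"
proof -
  have "z \<in> cnbhd E a" using assms(4) unfolding cnbhd_def nbhd_def by simp
  then have "z \<in> cnbhd E a'" using assms(1) unfolding tw_def by simp
  then show ?thesis using assms(3) unfolding cnbhd_def nbhd_def by simp
qed

lemma tw_dG: "tw u u' \<Longrightarrow> z \<in> V \<Longrightarrow> z \<noteq> u \<Longrightarrow> z \<noteq> u' \<Longrightarrow> dG z u = dG z u' \<and> dG u z = dG u' z"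
  using D3 unfolding tw_def by blast

lemma T_iff: "z \<in> TT \<longleftrightarrow> z \<in> V \<and> (\<exists>y. tw z y \<and> y \<noteq> z)"
proof
  assume "z \<in> TT"
  then obtain U0 where U0: "U0 \<in> twin_classes V E" "z \<in> U0" unfolding twin_set_def by blast
  then obtain x where x0: "x \<in> V" "U0 = {y\<in>V. cnbhd E y = cnbhd E x}" "2 \<le> card U0"
    unfolding twin_classes_def by blast
  have x: "x \<in> V" "z \<in> {y\<in>V. cnbhd E y = cnbhd E x}"
    "2 \<le> card {y\<in>V. cnbhd E y = cnbhd E x}" using x0 U0(2) by auto
  define U where "U = {y\<in>V. cnbhd E y = cnbhd E x}"
  have "\<exists>y\<in>U. y \<noteq> z"
  proof (rule ccontr)
    assume "\<not> ?thesis"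
    then have "U \<subseteq> {z}" by auto
    then have "card U \<le> 1" using card_mono[of "{z}" U] by simp
    then show False using x(3) unfolding U_def by simp
  qed
  then obtain y where "y \<in> U" "y \<noteq> z" by blast
  then show "z \<in> V \<and> (\<exists>y. tw z y \<and> y \<noteq> z)" using x(2) unfolding U_def tw_def by auto
next
  assume a: "z \<in> V \<and> (\<exists>y. tw z y \<and> y \<noteq> z)"
  then obtain y where y: "tw z y" "y \<noteq> z" by blast
  define U where "U = {w\<in>V. cnbhd E w = cnbhd E z}"
  have "{z, y} \<subseteq> U" using y a unfolding U_def tw_def by auto
  moreover have "finite U" using finV unfolding U_def by simp
  ultimately have "card {z,y} \<le> card U" by (rule card_mono[rotated])
  then have "2 \<le> card U" using y(2) by simp
  then have "U \<in> twin_classes V E" using a unfolding twin_classes_def U_def by blast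
  moreover have "z \<in> U" using a unfolding U_def by simp
  ultimately show "z \<in> TT" unfolding twin_set_def by blast
qed

lemma X_I: "X \<subseteq> II" using XC unfolding XE_choice_def by simp
lemma I_V: "II \<subseteq> V" unfolding I_set_def by auto
lemma IT_X: "u \<in> II \<Longrightarrow> u \<notin> TT \<Longrightarrow> u \<in> X" using XC unfolding XE_choice_def by blast

lemma class_of: assumes "u \<in> TT"
  shows "{y\<in>V. cnbhd E y = cnbhd E u} \<in> twin_classes V E"
proof -
  have "u \<in> V \<and> (\<exists>y. tw u y \<and> y \<noteq> u)" using T_iff[THEN iffD1, OF assms] .
  then obtain y where y: "tw u y" "y \<noteq> u" "u \<in> V" by blast
  define U where "U = {w\<in>V. cnbhd E w = cnbhd E u}"
  have "{u, y} \<subseteq> U" using y unfolding U_def tw_def by auto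
  moreover have "finite U" using finV unfolding U_def by simp
  ultimately have "card {u,y} \<le> card U" by (rule card_mono[rotated])
  then have c2: "2 \<le> card U" using y(2) by simp
  show ?thesis unfolding twin_classes_def mem_Collect_eq
  proof (rule bexI[of _ u])
    show "{y \<in> V. cnbhd E y = cnbhd E u} = {y \<in> V. cnbhd E y = cnbhd E u} \<and>
      2 \<le> card {y \<in> V. cnbhd E y = cnbhd E u}" using c2 unfolding U_def by simp
    show "u \<in> V" by (rule y(3))
  qed
qed

lemma XC_card: "U \<in> twin_classes V E \<Longrightarrow> II \<inter> U \<noteq> {} \<Longrightarrow> card (X \<inter> U) = 1"
proof -
  have "\<forall>U\<in>twin_classes V E. II \<inter> U \<noteq> {} \<longrightarrow> card (X \<inter> U) = 1"
    using XC unfolding XE_choice_def by simp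
  then show "U \<in> twin_classes V E \<Longrightarrow> II \<inter> U \<noteq> {} \<Longrightarrow> card (X \<inter> U) = 1" by simp
qed

lemma X_rep: assumes "u \<in> II" "u \<in> TT" shows "\<exists>x\<in>X. tw u x"
proof -
  define U where "U = {y\<in>V. cnbhd E y = cnbhd E u}"
  have U: "U \<in> twin_classes V E" using class_of[OF assms(2)] unfolding U_def .
  have "u \<in> U" using assms I_V unfolding U_def by auto
  then have "II \<inter> U \<noteq> {}" using assms(1) by blast
  then have "card (X \<inter> U) = 1" using XC_card[OF U] by simp
  then obtain x where "X \<inter> U = {x}" by (rule card_1_singletonE)
  then have "x \<in> X" "x \<in> U" by auto
  then show ?thesis using assms I_V unfolding U_def tw_def by auto
qed

lemma X_uniq: assumes "x \<in> X" "x' \<in> X" "tw x x'" shows "x = x'"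
proof (rule ccontr)
  assume ne: "x \<noteq> x'"
  have xT: "x \<in> TT" by (rule T_iff[THEN iffD2]) (use assms(3) ne tw_V[OF assms(3)] in blast)
  define U where "U = {y\<in>V. cnbhd E y = cnbhd E x}"
  have U: "U \<in> twin_classes V E" using class_of[OF xT] unfolding U_def .
  have xU: "x \<in> U" "x' \<in> U" using assms(3) unfolding U_def tw_def by auto
  have "II \<inter> U \<noteq> {}" using xU assms(1) X_I by blast
  then have "card (X \<inter> U) = 1" using XC_card[OF U] by simp
  then obtain w where w: "X \<inter> U = {w}" by (rule card_1_singletonE)
  have "x \<in> X \<inter> U" "x' \<in> X \<inter> U" using xU assms(1,2) by auto
  then have "x = w" "x' = w" using w by auto
  then show False using ne by simp
qed

lemma IX_T: "u \<in> II \<Longrightarrow> u \<notin> X \<Longrightarrow> u \<in> TT" using IT_X by blast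

lemma finX: "finite X"
proof -
  have "X \<subseteq> V" using X_I I_V by blast
  then show ?thesis using finite_subset[OF _ finV] by blast
qed


lemma PV_eq: "PV = Sigma V HV" unfolding lex_V_def ..

lemma tw_edge: assumes "tw a a'" "tw b b'" "E a b" "a' \<noteq> b'" shows "E a' b'"
proof -
  have ab: "a \<noteq> b" using assms(3) graph_irr[OF G] by blast
  show ?thesis
  proof (cases "a' = b")
    case True
    then have "b \<noteq> b'" using assms(4) by simp
    then have "E b b'" using tw_adj[OF assms(2)] by simp
    then show ?thesis using True by simp
  next
    case False
    have e1: "E a' b" using tw_E[OF assms(1) ab[symmetric] False[symmetric] assms(3)] .
    show ?thesis
    proof (cases "b' = b")
      case True then show ?thesis using e1 by simp
    next
      case False2: False
      have eba: "E b a'" using graph_sym[OF G e1] .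
      have "E b' a'" using tw_E[OF assms(2) False assms(4) eba] .
      then show ?thesis using graph_sym[OF G] by blast
    qed
  qed
qed

lemma twin_I_eq_sum: "sum (\<lambda>u. aa u + (if u \<in> J then 1 else 0)) V = sum aa V + card J"
  if "J \<subseteq> V" for J
proof -
  have "sum (\<lambda>u. aa u + (if u \<in> J then 1 else 0)) V = sum aa V + sum (\<lambda>u. if u \<in> J then 1 else 0) V"
    by (simp add: sum.distrib)
  also have "sum (\<lambda>u. if u \<in> J then 1 else (0::nat)) V = sum (\<lambda>u. 1) (V \<inter> J)"
    using sum.inter_restrict[OF finV, of "\<lambda>u. (1::nat)" J] by simp
  also have "\<dots> = card J" using that by (simp add: Int_absorb1)
  finally show ?thesis .
qed

lemma P_fiber_res: assumes S: "local_res dP PV PE S" and u: "u \<in> V"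
  shows "resH u {t. (u,t) \<in> S}"
proof -
  have SP: "S \<subseteq> Sigma V HV" using S unfolding local_res_def PV_eq by simp
  have sub: "{t. (u,t) \<in> S} \<subseteq> HV u" using SP by auto
  have "\<exists>s\<in>{t. (u,t) \<in> S}. dist2 (HV u) (HE u) s x \<noteq> dist2 (HV u) (HE u) s y" if e: "HE u x y" for x y
  proof -
    have m: "x \<in> HV u" "y \<in> HV u" using graph_mem[OF HVu[OF u] e] by auto
    have "PE (u,x) (u,y)" using u m e by (simp add: lexE_iff)
    then obtain s where s: "s \<in> S" "dP s (u,x) \<noteq> dP s (u,y)" using S unfolding local_res_def by blast
    obtain z t where zt: "s = (z,t)" by (cases s)
    have zt2: "z \<in> V" "t \<in> HV z" using s(1) SP zt by auto
    have d1: "dP (z,t) (u,x) = (if z = u then dist2 (HV u) (HE u) t x else dG z u)" using dPf zt2 u m by blast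
    have d2: "dP (z,t) (u,y) = (if z = u then dist2 (HV u) (HE u) t y else dG z u)" using dPf zt2 u m by blast
    have "z = u" using s(2) d1 d2 zt by (cases "z = u") auto
    then show ?thesis using s zt d1 d2 by auto
  qed
  then show ?thesis using sub u by (simp add: res_iff)
qed

lemma P_cross: assumes S: "local_res dP PV PE S" and e: "E u u'" and v: "v \<in> HV u" and w: "w \<in> HV u'"
  and Fu: "{t. (u,t) \<in> S} \<subseteq> nbhd (HE u) v" and Fu': "{t. (u',t) \<in> S} \<subseteq> nbhd (HE u') w"
  shows "\<exists>z t. (z,t) \<in> S \<and> z \<noteq> u \<and> z \<noteq> u' \<and> dG z u \<noteq> dG z u'"
proof -
  have SP: "S \<subseteq> Sigma V HV" using S unfolding local_res_def PV_eq by simp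
  have uV: "u \<in> V" "u' \<in> V" using graph_mem[OF G e] by auto
  have uu: "u \<noteq> u'" using e graph_irr[OF G] by blast
  have "PE (u,v) (u',w)" using uV v w e by (simp add: lexE_iff)
  then obtain s where s: "s \<in> S" "dP s (u,v) \<noteq> dP s (u',w)" using S unfolding local_res_def by blast
  obtain z t where zt: "s = (z,t)" by (cases s)
  have zt2: "z \<in> V" "t \<in> HV z" using s(1) SP zt by auto
  have d1: "dP (z,t) (u,v) = (if z = u then dist2 (HV u) (HE u) t v else dG z u)" using dPf zt2 uV v by blast
  have d2: "dP (z,t) (u',w) = (if z = u' then dist2 (HV u') (HE u') t w else dG z u')" using dPf zt2 uV w by blast
  have "z \<noteq> u"
  proof
    assume zu: "z = u"
    have "t \<in> nbhd (HE u) v" using Fu s(1) zt zu by auto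
    then have "dist2 (HV u) (HE u) t v = 1" using nb_one[OF uV(1) v] by simp
    moreover have "dG u u' = 1" using D1[OF e] .
    ultimately show False using s(2) zt zu d1 d2 uu by simp
  qed
  moreover have "z \<noteq> u'"
  proof
    assume zu: "z = u'"
    have "t \<in> nbhd (HE u') w" using Fu' s(1) zt zu by auto
    then have "dist2 (HV u') (HE u') t w = 1" using nb_one[OF uV(2) w] by simp
    moreover have "dG u' u = 1" using D1[OF graph_sym[OF G e]] .
    ultimately show False using s(2) zt zu d1 d2 uu by simp
  qed
  ultimately show ?thesis using s zt d1 d2 by auto
qed

lemma lower: assumes S: "local_res dP PV PE S"
  shows "sum aa V + card (II - X) + rho_gen dG V E VE X \<le> card S"
proof -
  have SP: "S \<subseteq> Sigma V HV" using S unfolding local_res_def PV_eq by simp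
  define F where "F u = {t. (u,t) \<in> S}" for u
  have Seq: "S = Sigma V F" using SP unfolding F_def by auto
  have finF: "\<forall>u\<in>V. finite (F u)"
  proof
    fix u assume "u \<in> V"
    have "F u \<subseteq> HV u" using SP unfolding F_def by auto
    then show "finite (F u)" using finite_subset[OF _ finHV[OF \<open>u \<in> V\<close>]] by blast
  qed
  have cardS: "card S = (\<Sum>u\<in>V. card (F u))" using Seq finV finF by simp
  have resF: "u \<in> V \<Longrightarrow> resH u (F u)" for u using P_fiber_res[OF S] unfolding F_def by simp
  have aF: "u \<in> V \<Longrightarrow> aa u \<le> card (F u)" for u using aa_le resF by blast
  define J where "J = {u \<in> II. aa u < card (F u)}"
  have JV: "J \<subseteq> V" using I_V unfolding J_def by auto
  have JI: "J \<subseteq> II" unfolding J_def by auto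
  have "sum (\<lambda>u. aa u + (if u \<in> J then 1 else 0)) V \<le> (\<Sum>u\<in>V. card (F u))"
  proof (rule sum_mono)
    fix u assume u: "u \<in> V"
    show "aa u + (if u \<in> J then 1 else 0) \<le> card (F u)" using aF[OF u] unfolding J_def by auto
  qed
  then have sum1: "sum aa V + card J \<le> card S" using twin_I_eq_sum[OF JV] cardS by simp
  have NG: "\<exists>v\<in>HV u. F u \<subseteq> nbhd (HE u) v" if "u \<in> II" "u \<notin> J" for u
  proof -
    have uV: "u \<in> V" using that I_V by auto
    have "card (F u) = aa u" using aF[OF uV] that unfolding J_def by auto
    then show ?thesis using basis_ng[OF that(1) resF[OF uV]] by simp
  qed
  have twinJ: False if tj: "u \<in> II" "u \<notin> J" "u' \<in> II" "u' \<notin> J" "tw u u'" "u \<noteq> u'" for u u'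
  proof -
    have e: "E u u'" using tw_adj tj by blast
    obtain v where v: "v \<in> HV u" "F u \<subseteq> nbhd (HE u) v" using NG[OF tj(1) tj(2)] by blast
    obtain w where w: "w \<in> HV u'" "F u' \<subseteq> nbhd (HE u') w" using NG[OF tj(3) tj(4)] by blast
    obtain z t where z: "(z,t) \<in> S" "z \<noteq> u" "z \<noteq> u'" "dG z u \<noteq> dG z u'"
      using P_cross[OF S e v(1) w(1)] v(2) w(2) unfolding F_def by blast
    have "z \<in> V" using z(1) SP by auto
    then show False using tw_dG[OF tj(5) _ z(2) z(3)] z(4) by simp
  qed
  define AT where "AT = {x \<in> X \<inter> TT. \<forall>y. tw x y \<longrightarrow> y \<in> II \<longrightarrow> y \<in> J}"
  define A where "A = (J \<inter> (X - TT)) \<union> AT"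
  have AX: "A \<subseteq> X" unfolding A_def AT_def by auto
  have prime: "\<exists>x'. x' \<in> II \<and> x' \<notin> J \<and> tw x x'" if "x \<in> X" "x \<notin> A" for x
  proof (cases "x \<in> J")
    case False
    then show ?thesis using that X_I I_V tw_refl by blast
  next
    case True
    then have "x \<in> TT" using that unfolding A_def by blast
    have "x \<notin> AT" using that(2) unfolding A_def by blast
    then have "\<not> (\<forall>y. tw x y \<longrightarrow> y \<in> II \<longrightarrow> y \<in> J)" using that(1) \<open>x \<in> TT\<close> unfolding AT_def by blast
    then show ?thesis by blast
  qed
  have feas: "rfeas dG V E VE X A" unfolding rfeas_def
  proof (intro conjI AX allI impI)
    fix ui uj assume R: "relR dG V E VE X ui uj"
    have R1: "ui \<in> X" "uj \<in> X" "E ui uj" and R2: "\<forall>u\<in>V - (VE \<union> {ui, uj}). dG u ui = dG u uj"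
      using R unfolding relR_def by auto
    show "\<exists>a\<in>A. dG a ui \<noteq> dG a uj"
    proof (rule ccontr)
      assume ALL: "\<not> (\<exists>a\<in>A. dG a ui \<noteq> dG a uj)"
      have uiV: "ui \<in> V" "uj \<in> V" using R1 X_I I_V by auto
      have uij: "ui \<noteq> uj" using R1(3) graph_irr[OF G] by blast
      have "ui \<notin> A"
      proof
        assume "ui \<in> A"
        then have "dG ui ui = dG ui uj" using ALL by blast
        then show False using D2[OF uiV(1)] D1[OF R1(3)] by simp
      qed
      then obtain ui' where ui': "ui' \<in> II" "ui' \<notin> J" "tw ui ui'" using prime R1(1) by blast
      have "uj \<notin> A"
      proof
        assume "uj \<in> A"
        then have "dG uj ui = dG uj uj" using ALL by blast
        then show False using D2[OF uiV(2)] D1[OF graph_sym[OF G R1(3)]] by simp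
      qed
      then obtain uj' where uj': "uj' \<in> II" "uj' \<notin> J" "tw uj uj'" using prime R1(2) by blast
      have ne': "ui' \<noteq> uj'"
      proof
        assume "ui' = uj'"
        then have "tw ui uj" using tw_trans[of ui ui' uj] ui'(3) tw_sym[OF uj'(3)] by simp
        then show False using X_uniq R1 uij by blast
      qed
      have e': "E ui' uj'" using tw_edge[OF ui'(3) uj'(3) R1(3) ne'] .
      obtain v where v: "v \<in> HV ui'" "F ui' \<subseteq> nbhd (HE ui') v" using NG[OF ui'(1) ui'(2)] by blast
      obtain w where w: "w \<in> HV uj'" "F uj' \<subseteq> nbhd (HE uj') w" using NG[OF uj'(1) uj'(2)] by blast
      obtain z t where z: "(z,t) \<in> S" "z \<noteq> ui'" "z \<noteq> uj'" "dG z ui' \<noteq> dG z uj'"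
        using P_cross[OF S e' v(1) w(1)] v(2) w(2) unfolding F_def by blast
      have zV: "z \<in> V" using z(1) SP by auto
      have ui_uj': "ui \<noteq> uj'"
      proof
        assume "ui = uj'"
        then have "tw uj ui" using uj'(3) by simp
        then show False using X_uniq R1 uij by metis
      qed
      have uj_ui': "uj \<noteq> ui'"
      proof
        assume "uj = ui'"
        then have "tw ui uj" using ui'(3) by simp
        then show False using X_uniq R1 uij by metis
      qed
      have zui: "z \<noteq> ui"
      proof
        assume zu: "z = ui"
        then have "ui \<noteq> ui'" using z(2) by simp
        then have "dG ui ui' = 1" using D1 tw_adj[OF ui'(3)] by blast
        moreover have "E ui uj'" using tw_edge[OF tw_refl[OF uiV(1)] uj'(3) R1(3) ui_uj'] .
        then have "dG ui uj' = 1" using D1 by blast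
        ultimately show False using z(4) zu by simp
      qed
      have zuj: "z \<noteq> uj"
      proof
        assume zu: "z = uj"
        then have "uj \<noteq> uj'" using z(3) by simp
        then have "dG uj uj' = 1" using D1 tw_adj[OF uj'(3)] by blast
        moreover have "E uj ui'"
          using tw_edge[OF tw_refl[OF uiV(2)] ui'(3) graph_sym[OF G R1(3)] uj_ui'] .
        then have "dG uj ui' = 1" using D1 by blast
        ultimately show False using z(4) zu by simp
      qed
      have "dG z ui' = dG z ui" using tw_dG[OF ui'(3) zV zui z(2)] by simp
      moreover have "dG z uj' = dG z uj" using tw_dG[OF uj'(3) zV zuj z(3)] by simp
      ultimately have dz: "dG z ui \<noteq> dG z uj" using z(4) by simp
      show False
      proof (cases "z \<in> VE")
        case False
        then show False using R2 zV zui zuj dz by blast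
      next
        case True
        then have zT: "z \<notin> TT" and el: "edgeless (HV z) (HE z)" unfolding V_E_def by auto
        have zI: "z \<in> II" "aa z = 0" using edgeless_I[OF zV el] by auto
        have zX: "z \<in> X" using IT_X[OF zI(1) zT] .
        have "t \<in> F z" using z(1) unfolding F_def by simp
        then have "card (F z) > 0" using finF zV card_gt_0_iff by blast
        then have "z \<in> J" using zI unfolding J_def by simp
        then have "z \<in> A" using zX zT unfolding A_def by blast
        then show False using ALL dz by blast
      qed
    qed
  qed
  have rhoA: "rho_gen dG V E VE X \<le> card A" using rho_le[OF finX feas] .
  define Miss where "Miss = (II \<inter> TT) - J"
  define r where "r m = (SOME x. x \<in> X \<and> tw m x)" for m
  have rM: "r m \<in> X \<and> tw m (r m)" if "m \<in> Miss" for m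
  proof -
    have "\<exists>x. x \<in> X \<and> tw m x" using X_rep that unfolding Miss_def by blast
    then show ?thesis unfolding r_def by (rule someI_ex)
  qed
  have inj: "inj_on r Miss"
  proof (rule inj_onI)
    fix m m' assume m: "m \<in> Miss" "m' \<in> Miss" "r m = r m'"
    have a: "tw m (r m)" using rM[OF m(1)] by simp
    have b1: "tw m' (r m')" using rM[OF m(2)] by simp
    have b0: "tw (r m') m'" using tw_sym[OF b1] .
    have b: "tw (r m) m'" using b0 m(3) by simp
    have "tw m m'" using tw_trans[OF a b] .
    have mm: "m \<in> II" "m \<notin> J" "m' \<in> II" "m' \<notin> J" using m(1,2) unfolding Miss_def by auto
    show "m = m'"
    proof (rule ccontr)
      assume "m \<noteq> m'"
      then show False using twinJ[OF mm \<open>tw m m'\<close>] by simp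
    qed
  qed
  have finI: "finite II" using finite_subset[OF I_V finV] .
  have rim: "r ` Miss \<subseteq> (X \<inter> TT) - AT"
  proof
    fix x assume "x \<in> r ` Miss"
    then obtain m where m: "m \<in> Miss" "x = r m" by blast
    have xX: "x \<in> X" "tw m x" using rM[OF m(1)] m(2) by auto
    have mT: "m \<in> TT" "m \<in> II" "m \<notin> J" using m(1) unfolding Miss_def by auto
    have "x \<in> TT"
    proof (cases "x = m")
      case True then show ?thesis using mT by simp
    next
      case False show ?thesis
        by (rule T_iff[THEN iffD2]) (use False tw_sym[OF xX(2)] tw_V[OF xX(2)] in blast)
    qed
    moreover have "x \<notin> AT" using tw_sym[OF xX(2)] mT unfolding AT_def by blast
    ultimately show "x \<in> (X \<inter> TT) - AT" using xX by blast
  qed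
  have c1: "card Miss \<le> card ((X \<inter> TT) - AT)" using card_inj_on_le[OF inj rim] finX by simp
  have c2: "card (X \<inter> TT) = card ((X \<inter> TT) - AT) + card AT"
  proof -
    have eq: "X \<inter> TT = ((X \<inter> TT) - AT) \<union> AT" unfolding AT_def by auto
    have f1: "finite AT" using finX unfolding AT_def by auto
    have f2: "finite ((X \<inter> TT) - AT)" using finX by auto
    have d: "((X \<inter> TT) - AT) \<inter> AT = {}" by auto
    have "card (((X \<inter> TT) - AT) \<union> AT) = card ((X \<inter> TT) - AT) + card AT"
      using card_Un_disjoint[OF f2 f1 d] .
    then show ?thesis using eq by simp
  qed
  have c3: "card (II \<inter> TT) = card (X \<inter> TT) + card (II - X)"
  proof -
    have "II \<inter> TT = (X \<inter> TT) \<union> (II - X)" using X_I IX_T by auto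
    moreover have "(X \<inter> TT) \<inter> (II - X) = {}" by auto
    ultimately show ?thesis using finX finI card_Un_disjoint[of "X \<inter> TT" "II - X"] by simp
  qed
  have c4: "card (II \<inter> TT) = card ((II \<inter> TT) - Miss) + card Miss"
  proof -
    have sub: "Miss \<subseteq> II \<inter> TT" unfolding Miss_def by auto
    have fI: "finite (II \<inter> TT)" using finI by simp
    have fM: "finite Miss" using finite_subset[OF sub fI] .
    have "card ((II \<inter> TT) - Miss) = card (II \<inter> TT) - card Miss" using card_Diff_subset[OF fM sub] .
    moreover have "card Miss \<le> card (II \<inter> TT)" using card_mono[OF fI sub] .
    ultimately show ?thesis by simp
  qed
  have c5: "card (J \<inter> (X - TT)) + card ((II \<inter> TT) - Miss) \<le> card J"
  proof -
    have sub: "(J \<inter> (X - TT)) \<union> ((II \<inter> TT) - Miss) \<subseteq> J" unfolding Miss_def by auto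
    have dis: "(J \<inter> (X - TT)) \<inter> ((II \<inter> TT) - Miss) = {}" by auto
    have finJ: "finite J" using finite_subset[OF JV finV] .
    have "card ((J \<inter> (X - TT)) \<union> ((II \<inter> TT) - Miss)) = card (J \<inter> (X - TT)) + card ((II \<inter> TT) - Miss)"
      using card_Un_disjoint[OF _ _ dis] finJ finI by simp
    then show ?thesis using card_mono[OF finJ sub] by simp
  qed
  have c6: "card A = card (J \<inter> (X - TT)) + card AT"
  proof -
    have dis: "(J \<inter> (X - TT)) \<inter> AT = {}" unfolding AT_def by auto
    have "finite (J \<inter> (X - TT))" "finite AT" using finX unfolding AT_def by auto
    then show ?thesis unfolding A_def using card_Un_disjoint[OF _ _ dis] by simp
  qed
  have "card A + card (II - X) \<le> card J" using c1 c2 c3 c4 c5 c6 by linarith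
  then show ?thesis using sum1 rhoA by linarith
qed


lemma upper: "\<exists>S. local_res dP PV PE S \<and> card S = sum aa V + card (II - X) + rho_gen dG V E VE X"
proof -
  have featX: "rfeas dG V E VE X X" unfolding rfeas_def
  proof (intro conjI subset_refl allI impI)
    fix ui uj assume R: "relR dG V E VE X ui uj"
    then have "ui \<in> X" "E ui uj" unfolding relR_def by auto
    moreover have "ui \<in> V" using \<open>ui \<in> X\<close> X_I I_V by auto
    ultimately have "dG ui ui \<noteq> dG ui uj" using D1[of ui uj] D2[of ui] by simp
    then show "\<exists>a\<in>X. dG a ui \<noteq> dG a uj" using \<open>ui \<in> X\<close> by blast
  qed
  obtain A0 where A0: "rfeas dG V E VE X A0" "card A0 = rho_gen dG V E VE X"
    using rho_ex[OF finX featX] by blast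
  have A0X: "A0 \<subseteq> X" using A0(1) unfolding rfeas_def by simp
  define J where "J = A0 \<union> (II - X)"
  have JI: "J \<subseteq> II" using A0X X_I unfolding J_def by auto
  have JV: "J \<subseteq> V" using JI I_V by auto
  have cJ: "card J = card A0 + card (II - X)"
  proof -
    have f1: "finite A0" using finite_subset[OF A0X finX] .
    have "II - X \<subseteq> V" using I_V by auto
    then have f2: "finite (II - X)" using finite_subset[OF _ finV] by blast
    have d: "A0 \<inter> (II - X) = {}" using A0X by auto
    show ?thesis unfolding J_def using card_Un_disjoint[OF f1 f2 d] .
  qed
  define Q where "Q u B \<longleftrightarrow> resH u B \<and> card B = aa u + (if u \<in> J then 1 else 0)
     \<and> ((u \<notin> II \<or> u \<in> J) \<longrightarrow> good u B)" for u B
  have Qex: "\<exists>B. Q u B" if u: "u \<in> V" for u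
  proof (cases "u \<in> J")
    case True
    then obtain B where "resH u B" "card B = aa u + 1" "good u B" using glemma JI by blast
    then show ?thesis using True unfolding Q_def by auto
  next
    case False
    show ?thesis
    proof (cases "u \<in> II")
      case True
      obtain B where "resH u B" "card B = aa u" using aa_ex[OF u] by blast
      then show ?thesis using True False unfolding Q_def by auto
    next
      case False2: False
      obtain B where "resH u B" "card B = aa u" "good u B" using nonG[OF u False2] by blast
      then show ?thesis using False unfolding Q_def by auto
    qed
  qed
  define B where "B u = (SOME B. Q u B)" for u
  have QB: "Q u (B u)" if "u \<in> V" for u unfolding B_def using someI_ex[OF Qex[OF that]] .
  have resB: "resH u (B u)" if "u \<in> V" for u using QB[OF that] unfolding Q_def by simp
  have cardB: "card (B u) = aa u + (if u \<in> J then 1 else 0)" if "u \<in> V" for u using QB[OF that] unfolding Q_def by simp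
  have goodB: "good u (B u)" if "u \<in> V" "u \<notin> II \<or> u \<in> J" for u using QB[OF that(1)] that(2) unfolding Q_def by simp
  have subB: "B u \<subseteq> HV u" if "u \<in> V" for u using resH_sub[OF that resB[OF that]] .
  have finB: "\<forall>u\<in>V. finite (B u)"
  proof
    fix u assume u: "u \<in> V"
    show "finite (B u)" using finite_subset[OF subB[OF u] finHV[OF u]] .
  qed
  have neJ: "B u \<noteq> {}" if "u \<in> V" "u \<in> J" for u
  proof
    assume "B u = {}"
    then show False using cardB[OF that(1)] that(2) by simp
  qed
  define S where "S = Sigma V B"
  have cS: "card S = sum aa V + card J"
  proof -
    have "card S = (\<Sum>u\<in>V. card (B u))" unfolding S_def using finV finB by simp
    also have "\<dots> = (\<Sum>u\<in>V. aa u + (if u \<in> J then 1 else 0))" using cardB by (simp cong: sum.cong)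
    also have "\<dots> = sum aa V + card J" using twin_I_eq_sum[OF JV] .
    finally show ?thesis .
  qed
  have SP: "S \<subseteq> PV" unfolding S_def PV_eq using subB by auto
  have dist: "\<exists>s\<in>S. dP s p \<noteq> dP s q" if pq: "PE p q" for p q
  proof -
    obtain u v u' w where pq': "p = (u,v)" "q = (u',w)" by (cases p, cases q) auto
    have m: "u \<in> V" "v \<in> HV u" "u' \<in> V" "w \<in> HV u'" and ee: "E u u' \<or> (u = u' \<and> HE u v w)"
      using pq unfolding pq' lexE_iff by auto
    show ?thesis
    proof (cases "E u u'")
      case False
      then have uu: "u = u'" "HE u v w" using ee by auto
      have rr: "\<forall>x y. HE u x y \<longrightarrow> (\<exists>s\<in>B u. dist2 (HV u) (HE u) s x \<noteq> dist2 (HV u) (HE u) s y)"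
        using resB[OF m(1)] unfolding local_res_def by simp
      have "\<exists>s\<in>B u. dist2 (HV u) (HE u) s v \<noteq> dist2 (HV u) (HE u) s w" using rr uu(2) by simp
      then obtain s where s: "s \<in> B u" "dist2 (HV u) (HE u) s v \<noteq> dist2 (HV u) (HE u) s w" by blast
      have sH: "s \<in> HV u" using s(1) subB[OF m(1)] by auto
      have "(u,s) \<in> S" using s(1) m(1) unfolding S_def by simp
      moreover have "dP (u,s) (u,v) \<noteq> dP (u,s) (u,w)" using dPf[OF m(1) sH m(1) m(2)] dPf[OF m(1) sH m(1)] m uu s(2) by simp
      ultimately show ?thesis using pq' uu by blast
    next
      case True
      have uu: "u \<noteq> u'" using True graph_irr[OF G] by blast
      have d1u: "dG u u' = 1" "dG u' u = 1" using D1 True graph_sym[OF G True] by auto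
      have zdist: "\<exists>s\<in>S. dP s p \<noteq> dP s q" if z: "z \<in> V" "z \<noteq> u" "z \<noteq> u'" "B z \<noteq> {}" "dG z u \<noteq> dG z u'" for z
      proof -
        obtain t where t: "t \<in> B z" using z(4) by blast
        have tH: "t \<in> HV z" using t subB[OF z(1)] by auto
        have "(z,t) \<in> S" using t z(1) unfolding S_def by simp
        moreover have "dP (z,t) (u,v) = dG z u" using dPf[OF z(1) tH m(1) m(2)] z(2) by simp
        moreover have "dP (z,t) (u',w) = dG z u'" using dPf[OF z(1) tH m(3) m(4)] z(3) by simp
        ultimately have "dP (z,t) p \<noteq> dP (z,t) q" using pq' z(5) by simp
        then show ?thesis using \<open>(z,t) \<in> S\<close> by blast
      qed
      show ?thesis
      proof (cases "good u (B u)")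
        case True
        have "\<not> B u \<subseteq> nbhd (HE u) v" using True m(2) by simp
        then obtain t where t: "t \<in> B u" "t \<notin> nbhd (HE u) v" by (auto simp: subset_iff)
        have tH: "t \<in> HV u" using t subB[OF m(1)] by auto
        have "(u,t) \<in> S" using t m(1) unfolding S_def by simp
        moreover have "dP (u,t) (u,v) \<noteq> 1" using dPf[OF m(1) tH m(1) m(2)] notnb[OF m(1) m(2) tH t(2)] by simp
        moreover have "dP (u,t) (u',w) = 1" using dPf[OF m(1) tH m(3) m(4)] uu d1u by simp
        ultimately have "dP (u,t) p \<noteq> dP (u,t) q" using pq' by simp
        then show ?thesis using \<open>(u,t) \<in> S\<close> by blast
      next
        case ngu: False
        show ?thesis
        proof (cases "good u' (B u')")
          case True
          have "\<not> B u' \<subseteq> nbhd (HE u') w" using True m(4) by simp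
          then obtain t where t: "t \<in> B u'" "t \<notin> nbhd (HE u') w" by (auto simp: subset_iff)
          have tH: "t \<in> HV u'" using t subB[OF m(3)] by auto
          have "(u',t) \<in> S" using t m(3) unfolding S_def by simp
          moreover have "dP (u',t) (u',w) \<noteq> 1" using dPf[OF m(3) tH m(3) m(4)] notnb[OF m(3) m(4) tH t(2)] by simp
          moreover have "dP (u',t) (u,v) = 1" using dPf[OF m(3) tH m(1) m(2)] uu d1u by simp
          ultimately have "dP (u',t) p \<noteq> dP (u',t) q" using pq' by simp
          then show ?thesis using \<open>(u',t) \<in> S\<close> by blast
        next
          case ngu': False
          have uI1: "u \<in> II \<and> u \<notin> J"
          proof (rule ccontr)
            assume "\<not> (u \<in> II \<and> u \<notin> J)"
            then have "good u (B u)" using goodB[OF m(1)] by blast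
            then show False using ngu by simp
          qed
          have uI2: "u' \<in> II \<and> u' \<notin> J"
          proof (rule ccontr)
            assume "\<not> (u' \<in> II \<and> u' \<notin> J)"
            then have "good u' (B u')" using goodB[OF m(3)] by blast
            then show False using ngu' by simp
          qed
          have uI: "u \<in> II" "u \<notin> J" "u' \<in> II" "u' \<notin> J" using uI1 uI2 by auto
          have uX: "u \<in> X" "u' \<in> X" using uI unfolding J_def by auto
          have uA: "u \<notin> A0" "u' \<notin> A0" using uI unfolding J_def by auto
          show ?thesis
          proof (cases "relR dG V E VE X u u'")
            case True
            have "\<forall>ui uj. relR dG V E VE X ui uj \<longrightarrow> (\<exists>a\<in>A0. dG a ui \<noteq> dG a uj)"
              using A0(1) unfolding rfeas_def by simp
            then have "\<exists>a\<in>A0. dG a u \<noteq> dG a u'" using True by simp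
            then obtain a where a: "a \<in> A0" "dG a u \<noteq> dG a u'" by blast
            have aV: "a \<in> V" using a(1) A0X X_I I_V by auto
            have "a \<noteq> u" "a \<noteq> u'" using a(1) uA by auto
            moreover have "B a \<noteq> {}" using neJ[OF aV] a(1) unfolding J_def by blast
            ultimately show ?thesis using zdist[OF aV] a(2) by blast
          next
            case False
            have "\<not> (\<forall>z\<in>V - (VE \<union> {u, u'}). dG z u = dG z u')"
              using False uX True unfolding relR_def by simp
            then have "\<exists>z. z \<in> V \<and> z \<notin> VE \<and> z \<noteq> u \<and> z \<noteq> u' \<and> dG z u \<noteq> dG z u'" by auto
            then obtain z where z: "z \<in> V" "z \<notin> VE" "z \<noteq> u" "z \<noteq> u'" "dG z u \<noteq> dG z u'" by blast
            show ?thesis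
            proof (cases "B z = {}")
              case False then show ?thesis using zdist z by blast
            next
              case Bz: True
              have el: "edgeless (HV z) (HE z)" using resH_empty[OF z(1)] resB[OF z(1)] Bz by simp
              have zT: "z \<in> TT" using z(1,2) el unfolding V_E_def by blast
              have zI: "z \<in> II" using edgeless_I[OF z(1) el] by simp
              have zJ: "z \<notin> J" using neJ[OF z(1)] Bz by blast
              have zX: "z \<in> X" using zI zJ unfolding J_def by blast
              have "\<exists>y. tw z y \<and> y \<noteq> z" using T_iff[THEN iffD1, OF zT] by simp
              then obtain y where y: "tw z y" "y \<noteq> z" by blast
              have yV: "y \<in> V" using tw_V[OF y(1)] by simp
              have yu: "y \<noteq> u"
              proof
                assume yu: "y = u"
                have twu: "tw u z" using tw_sym[OF y(1)] yu by simp
                have "E z u" using tw_adj[OF y(1)] y(2) yu by simp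
                moreover have "E z u'" using tw_E[OF twu uu[symmetric] z(4)[symmetric] True] .
                ultimately show False using D1 z(5) by simp
              qed
              have yu': "y \<noteq> u'"
              proof
                assume yu: "y = u'"
                have twu: "tw u' z" using tw_sym[OF y(1)] yu by simp
                have "E z u'" using tw_adj[OF y(1)] y(2) yu by simp
                moreover have "E z u" using tw_E[OF twu uu z(3)[symmetric] graph_sym[OF G True]] .
                ultimately show False using D1 z(5) by simp
              qed
              have "dG z u = dG y u" "dG z u' = dG y u'"
                using tw_dG[OF y(1) m(1) z(3)[symmetric] yu[symmetric]]
                  tw_dG[OF y(1) m(3) z(4)[symmetric] yu'[symmetric]] by auto
              then have dy: "dG y u \<noteq> dG y u'" using z(5) by simp
              have "B y \<noteq> {}"
              proof (cases "y \<in> J")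
                case True then show ?thesis using neJ[OF yV] by blast
              next
                case yJ: False
                show ?thesis
                proof (cases "y \<in> II")
                  case False then show ?thesis using good_ne[OF yV goodB[OF yV]] by blast
                next
                  case True
                  then have "y \<in> X" using yJ unfolding J_def by blast
                  then show ?thesis using X_uniq[OF zX _ y(1)] y(2) by blast
                qed
              qed
              then show ?thesis using zdist[OF yV yu yu'] dy by blast
            qed
          qed
        qed
      qed
    qed
  qed
  have "local_res dP PV PE S" unfolding local_res_def using SP dist by blast
  then show ?thesis using cS cJ A0(2) by (intro exI[of _ S]) simp
qed

lemma ldim_formula: "ldim dP PV PE = sum aa V + card (II - X) + rho_gen dG V E VE X"
proof -
  obtain S where S: "local_res dP PV PE S" "card S = sum aa V + card (II - X) + rho_gen dG V E VE X"
    using upper by blast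
  have le: "ldim dP PV PE \<le> sum aa V + card (II - X) + rho_gen dG V E VE X"
    using ldim_le[OF finPV S(1)] S(2) by simp
  obtain S' where S': "local_res dP PV PE S'" "card S' = ldim dP PV PE" using ldim_ex[OF finPV S(1)] by blast
  show ?thesis using lower[OF S'(1)] S'(2) le by simp
qed

end



theorem theorem8:
  fixes V :: "'a set" and E :: "'a \<Rightarrow> 'a \<Rightarrow> bool"
    and HV :: "'a \<Rightarrow> 'b set" and HE :: "'a \<Rightarrow> 'b \<Rightarrow> 'b \<Rightarrow> bool"
    and X :: "'a set"
  assumes "connected_graph V E"
    and "card V \<ge> 2"
    and "\<forall>u\<in>V. graph (HV u) (HE u)"
    and "XE_choice V E HV HE X"
  shows "dim_l (lex_V V HV) (lex_E V E HV HE) = adim_l (lex_V V HV) (lex_E V E HV HE)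
     \<longleftrightarrow> rho V E HV HE X = rho' V E HV HE X"
proof -
  have G: "graph V E" using assms(1) unfolding connected_graph_def by simp
  have H: "\<forall>u\<in>V. graph (HV u) (HE u)" by (rule assms(3))
  have ne: "\<forall>u\<in>V. HV u \<noteq> {}" using H unfolding graph_def by blast
  have PV: "lex_V V HV = Sigma V HV" unfolding lex_V_def ..
  have gP: "gdist (lex_V V HV) (lex_E V E HV HE) (z,t) (u,v) =
      (if z = u then dist2 (HV u) (HE u) t v else gdist V E z u)"
    if m: "z \<in> V" "t \<in> HV z" "u \<in> V" "v \<in> HV u" for z t u v
  proof (cases "z = u")
    case True
    obtain u' where "E u u'" using exists_nbr[OF assms(1) assms(2) m(3)] by blast
    then show ?thesis using gdistP_same[OF G H m(3) _ m(4)] m True PV by simp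
  next
    case False
    then show ?thesis using gdistP_diff[OF G ne False m] PV by simp
  qed
  have d2P: "dist2 (lex_V V HV) (lex_E V E HV HE) (z,t) (u,v) =
      (if z = u then dist2 (HV u) (HE u) t v else dist2 V E z u)"
    if m: "z \<in> V" "t \<in> HV z" "u \<in> V" "v \<in> HV u" for z t u v
    using gP[OF m] unfolding dist2_def by (simp add: min.assoc)
  have g1: "gdist V E x y = 1" if e: "E x y" for x y
  proof -
    have m: "x \<in> V" "y \<in> V" using graph_mem[OF G e] by auto
    have "x \<noteq> y" using graph_irr[OF G] e by blast
    then show ?thesis using gdist_one[of E x y V] e m by blast
  qed
  have g2: "gdist V E x x = 0" if "x \<in> V" for x using gdist_refl[OF that] .
  have g3: "gdist V E z u = gdist V E z u' \<and> gdist V E u z = gdist V E u' z"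
    if "cnbhd E u = cnbhd E u'" "z \<noteq> u" "z \<noteq> u'" for u u' z
    using twin_eq[OF G that] .
  have C1: "core V E HV HE X (gdist V E) (gdist (lex_V V HV) (lex_E V E HV HE))"
  proof (rule core.intro)
    show "graph V E" by (rule G)
    show "\<forall>u\<in>V. graph (HV u) (HE u)" by (rule H)
    show "XE_choice V E HV HE X" by (rule assms(4))
    show "\<And>z t u v. z \<in> V \<Longrightarrow> t \<in> HV z \<Longrightarrow> u \<in> V \<Longrightarrow> v \<in> HV u \<Longrightarrow>
       gdist (lex_V V HV) (lex_E V E HV HE) (z,t) (u,v) = (if z = u then dist2 (HV u) (HE u) t v else gdist V E z u)"
      by (rule gP)
    show "\<And>x y. E x y \<Longrightarrow> gdist V E x y = 1" by (rule g1)
    show "\<And>x. x \<in> V \<Longrightarrow> gdist V E x x = 0" by (rule g2)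
    show "\<And>u u' z. u \<in> V \<Longrightarrow> u' \<in> V \<Longrightarrow> cnbhd E u = cnbhd E u' \<Longrightarrow> z \<in> V \<Longrightarrow>
       z \<noteq> u \<Longrightarrow> z \<noteq> u' \<Longrightarrow> gdist V E z u = gdist V E z u' \<and> gdist V E u z = gdist V E u' z"
      using g3 by blast
  qed
  have C2: "core V E HV HE X (dist2 V E) (dist2 (lex_V V HV) (lex_E V E HV HE))"
  proof (rule core.intro)
    show "graph V E" by (rule G)
    show "\<forall>u\<in>V. graph (HV u) (HE u)" by (rule H)
    show "XE_choice V E HV HE X" by (rule assms(4))
    show "\<And>z t u v. z \<in> V \<Longrightarrow> t \<in> HV z \<Longrightarrow> u \<in> V \<Longrightarrow> v \<in> HV u \<Longrightarrow>
       dist2 (lex_V V HV) (lex_E V E HV HE) (z,t) (u,v) = (if z = u then dist2 (HV u) (HE u) t v else dist2 V E z u)"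
      by (rule d2P)
    show "\<And>x y. E x y \<Longrightarrow> dist2 V E x y = 1"
    proof -
      fix x y assume "E x y"
      then have "gdist V E x y = 1" by (rule g1)
      then show "dist2 V E x y = 1" unfolding dist2_def by simp
    qed
    show "\<And>x. x \<in> V \<Longrightarrow> dist2 V E x x = 0"
    proof -
      fix x assume "x \<in> V"
      then have "gdist V E x x = 0" by (rule g2)
      then show "dist2 V E x x = 0" unfolding dist2_def by simp
    qed
    show "\<And>u u' z. u \<in> V \<Longrightarrow> u' \<in> V \<Longrightarrow> cnbhd E u = cnbhd E u' \<Longrightarrow> z \<in> V \<Longrightarrow>
       z \<noteq> u \<Longrightarrow> z \<noteq> u' \<Longrightarrow> dist2 V E z u = dist2 V E z u' \<and> dist2 V E u z = dist2 V E u' z"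
    proof -
      fix u u' z assume a: "cnbhd E u = cnbhd E u'" "z \<noteq> u" "z \<noteq> u'"
      have "gdist V E z u = gdist V E z u' \<and> gdist V E u z = gdist V E u' z" using g3[OF a] .
      then show "dist2 V E z u = dist2 V E z u' \<and> dist2 V E u z = dist2 V E u' z" unfolding dist2_def by simp
    qed
  qed
  have "dim_l (lex_V V HV) (lex_E V E HV HE) = (\<Sum>u\<in>V. adim_l (HV u) (HE u)) + card (I_set V HV HE - X) + rho V E HV HE X"
    unfolding dim_l_def rho_def using core.ldim_formula[OF C1] .
  moreover have "adim_l (lex_V V HV) (lex_E V E HV HE) = (\<Sum>u\<in>V. adim_l (HV u) (HE u)) + card (I_set V HV HE - X) + rho' V E HV HE X"
    unfolding adim_l_def[of "lex_V V HV"] rho'_def using core.ldim_formula[OF C2] .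
  ultimately show ?thesis by simp
qed



end
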